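(* Under the hypotheses and notation below, fix $\epsilon>0$ and define $$\Gamma_N^{\epsilon}(\mathcal{K}^* )=\{z\in\mathrm{Grid}(N):\ \sigma_{\inf}((\mathcal{K}^*-zI)\mathcal{P}_N^* )<\epsilon\}.$$ Then $\Gamma_N^{\epsilon}(\mathcal{K}^* )\subset\mathrm{Sp}_{\mathrm{ap},\epsilon}(\mathcal{K}^* )$ for every $N\in\mathbb{N}$, and $\Gamma_N^{\epsilon}(\mathcal{K}^* )\to\mathrm{Sp}_{\mathrm{ap},\epsilon}(\mathcal{K}^* )$ in the Attouch–Wets sense as $N\to\infty$.
   Context: $\mathcal{H}$ is a reproducing kernel Hilbert space (RKHS) of complex-valued functions on a set $\mathcal{X}$ with reproducing kernel $\mathfrak{K}$, inner product $\langle\cdot,\cdot\rangle$ and norm $\|\cdot\|$; $\mathfrak{K}_x$ is the kernel function at $x$ ($g(x)=\langle g,\mathfrak{K}_x\rangle$). For $F:\mathcal{X}\to\mathcal{X}$ the Koopman operator $\mathcal{K}g=g\circ F$ has domain $\{g\in\mathcal{H}:g\circ F\in\mathcal{H}\}$ and is closed; assume it is densely defined, and let $\mathcal{K}^*$ be its adjoint (then $\mathcal{K}^*\mathfrak{K}_x=\mathfrak{K}_{F(x)}$). Let $\mathfrak{K}_1,\mathfrak{K}_2,\dots$ be a countable family of kernel functions whose span is a core of $\mathcal{K}^*$, $V_N=\mathrm{span}\{\mathfrak{K}_1,\dots,\mathfrak{K}_N\}$, $\mathcal{P}_N$ the orthogonal projection onto $V_N$ and $\mathcal{P}_N^*$ the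 inclusion of $V_N$ into $\mathcal{H}$. Injection modulus: $\sigma_{\inf}(T)=\inf\{\|Tg\|/\|g\|:0\neq g\in\mathcal{D}(T)\}$. Approximate point $\epsilon$-pseudospectrum: $\mathrm{Sp}_{\mathrm{ap},\epsilon}(T)=\overline{\{z\in\mathbb{C}:\sigma_{\inf}(T-zI)<\epsilon\}}$. $\mathrm{Grid}(N)=\frac1N(\mathbb{Z}+i\mathbb{Z})\cap\{z:|z|\le N\}$. Attouch–Wets convergence of closed sets $C_n\to C$: if $C=\emptyset$, this means that for every $m\in\mathbb{N}$, $C_n\cap B_m(0)=\emptyset$ for all large $n$; if $C\ne\emptyset$, it means $C_n\neq\emptyset$ for large $n$ and $d_{\mathrm{AW}}(C_n,C)\to0$, where $d_{\mathrm{AW}}(X,Y)=\sum_{m\ge1}2^{-m}\min\{1,\sup_{x\in B_m(0)}|\mathrm{dist}(x,X)-\mathrm{dist}(x,Y)|\}$ and $B_m(0)$ is the closed ball of radius $m$ about $0$; equivalently, for every $\delta>0$ and compact $K\subset\mathbb{C}$, eventually $C_n\cap K\subset C+B_\delta(0)$ and $C\cap K\subset C_n+B_\delta(0)$. *)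

theory Defs
  imports "HOL-Analysis.Analysis"
begin

text \<open>Functions on the set X are modelled as functions on a type 'x.
  H is a set of complex-valued functions, ip its inner product
  (linear in the first, conjugate linear in the second argument),
  kf x is the kernel function at x.\<close>

definition hnorm :: "(('x \<Rightarrow> complex) \<Rightarrow> ('x \<Rightarrow> complex) \<Rightarrow> complex)
    \<Rightarrow> ('x \<Rightarrow> complex) \<Rightarrow> real" where
  "hnorm ip g = sqrt (Re (ip g g))"

definition fdiff :: "('x \<Rightarrow> complex) \<Rightarrow> ('x \<Rightarrow> complex) \<Rightarrow> ('x \<Rightarrow> complex)" where
  "fdiff f g = (\<lambda>y. f y - g y)"

definition is_hilbert_space :: "('x \<Rightarrow> complex) set
    \<Rightarrow> (('x \<Rightarrow> complex) \<Rightarrow> ('x \<Rightarrow> complex) \<Rightarrow> complex) \<Rightarrow> bool" where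
  "is_hilbert_space H ip \<longleftrightarrow>
     (\<lambda>y. 0) \<in> H \<and>
     (\<forall>f\<in>H. \<forall>g\<in>H. \<forall>c::complex. (\<lambda>y. c * f y + g y) \<in> H) \<and>
     (\<forall>f\<in>H. \<forall>g\<in>H. \<forall>h\<in>H. \<forall>c::complex.
        ip (\<lambda>y. c * f y + g y) h = c * ip f h + ip g h) \<and>
     (\<forall>f\<in>H. \<forall>g\<in>H. ip g f = cnj (ip f g)) \<and>
     (\<forall>f\<in>H. Im (ip f f) = 0 \<and> Re (ip f f) \<ge> 0) \<and>
     (\<forall>f\<in>H. ip f f = 0 \<longrightarrow> f = (\<lambda>y. 0)) \<and>
     (\<forall>s. (\<forall>n. s n \<in> H) \<and>
          (\<forall>e>0. \<exists>M. \<forall>m\<ge>M. \<forall>n\<ge>M. hnorm ip (fdiff (s m) (s n)) < e)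
          \<longrightarrow> (\<exists>g\<in>H. (\<lambda>n. hnorm ip (fdiff (s n) g)) \<longlonglongrightarrow> 0))"

definition is_rkhs :: "('x \<Rightarrow> complex) set
    \<Rightarrow> (('x \<Rightarrow> complex) \<Rightarrow> ('x \<Rightarrow> complex) \<Rightarrow> complex)
    \<Rightarrow> ('x \<Rightarrow> 'x \<Rightarrow> complex) \<Rightarrow> bool" where
  "is_rkhs H ip kf \<longleftrightarrow> is_hilbert_space H ip \<and>
     (\<forall>x. kf x \<in> H) \<and> (\<forall>g\<in>H. \<forall>x. g x = ip g (kf x))"

definition koop_dom :: "('x \<Rightarrow> complex) set \<Rightarrow> ('x \<Rightarrow> 'x) \<Rightarrow> ('x \<Rightarrow> complex) set" where
  "koop_dom H F = {g\<in>H. g \<circ> F \<in> H}"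

definition densely_defined_in where
  "densely_defined_in H ip D \<longleftrightarrow> D \<subseteq> H \<and>
     (\<forall>g\<in>H. \<forall>e>0. \<exists>f\<in>D. hnorm ip (fdiff g f) < e)"

definition kadj_dom where
  "kadj_dom H ip F = {h\<in>H. \<exists>w\<in>H. \<forall>g\<in>koop_dom H F. ip (g \<circ> F) h = ip g w}"

definition kadj where
  "kadj H ip F h = (THE w. w \<in> H \<and> (\<forall>g\<in>koop_dom H F. ip (g \<circ> F) h = ip g w))"

definition fspan :: "('x \<Rightarrow> complex) set \<Rightarrow> ('x \<Rightarrow> complex) set" where
  "fspan S = {g. \<exists>I c. finite I \<and> I \<subseteq> S \<and> g = (\<lambda>y. \<Sum>f\<in>I. c f * f y)}"

definition is_core where
  "is_core ip D T S \<longleftrightarrow> S \<subseteq> D \<and>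
     (\<forall>h\<in>D. \<exists>s. (\<forall>n. s n \<in> S) \<and> (\<lambda>n. hnorm ip (fdiff (s n) h)) \<longlonglongrightarrow> 0
                 \<and> (\<lambda>n. hnorm ip (fdiff (T (s n)) (T h))) \<longlonglongrightarrow> 0)"

text \<open>Injection modulus (infimum of the empty set is +\<infinity>).\<close>
definition sigma_inf where
  "sigma_inf ip D T = Inf {ereal (hnorm ip (T g) / hnorm ip g) | g. g \<in> D \<and> g \<noteq> (\<lambda>y. 0)}"

definition kadj_shift where
  "kadj_shift H ip F z = (\<lambda>g. fdiff (kadj H ip F g) (\<lambda>y. z * g y))"

definition sp_ap_eps where
  "sp_ap_eps H ip F \<epsilon> =
     closure {z. sigma_inf ip (kadj_dom H ip F) (kadj_shift H ip F z) < ereal \<epsilon>}"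

definition Grid :: "nat \<Rightarrow> complex set" where
  "Grid N = {z. \<exists>a b :: int. z = Complex (of_int a / real N) (of_int b / real N) \<and> cmod z \<le> real N}"

definition V_N where
  "V_N kf xs N = fspan ((\<lambda>j. kf (xs j)) ` {1..N})"

definition Gamma_N where
  "Gamma_N H ip kf F xs \<epsilon> N =
     {z \<in> Grid N. sigma_inf ip (V_N kf xs N) (kadj_shift H ip F z) < ereal \<epsilon>}"

definition d_AW :: "complex set \<Rightarrow> complex set \<Rightarrow> real" where
  "d_AW X Y = (\<Sum>m. (1/2) ^ (Suc m) *
      min 1 (SUP x\<in>cball 0 (real (Suc m)). \<bar>infdist x X - infdist x Y\<bar>))"

definition AW_converges :: "(nat \<Rightarrow> complex set) \<Rightarrow> complex set \<Rightarrow> bool" where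
  "AW_converges C0 C \<longleftrightarrow>
     (if C = {} then (\<forall>m::nat. eventually (\<lambda>n. C0 n \<inter> cball 0 (real m) = {}) sequentially)
      else (eventually (\<lambda>n. C0 n \<noteq> {}) sequentially \<and>
            (\<lambda>n. d_AW (C0 n) C) \<longlonglongrightarrow> 0))"

end

theory Submission
  imports Defs
begin

locale hs =
  fixes H :: "('x \<Rightarrow> complex) set" and ip :: "('x \<Rightarrow> complex) \<Rightarrow> ('x \<Rightarrow> complex) \<Rightarrow> complex"
  assumes hil: "is_hilbert_space H ip"
begin

lemma zero_in: "(\<lambda>y. 0) \<in> H" using hil unfolding is_hilbert_space_def by blast
lemma lin_in: "f \<in> H \<Longrightarrow> g \<in> H \<Longrightarrow> (\<lambda>y. c * f y + g y) \<in> H"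
  using hil unfolding is_hilbert_space_def by blast
lemma ip_lin: "f \<in> H \<Longrightarrow> g \<in> H \<Longrightarrow> h \<in> H \<Longrightarrow> ip (\<lambda>y. c * f y + g y) h = c * ip f h + ip g h"
  using hil unfolding is_hilbert_space_def by blast
lemma ip_sym: "f \<in> H \<Longrightarrow> g \<in> H \<Longrightarrow> ip g f = cnj (ip f g)"
  using hil unfolding is_hilbert_space_def by blast
lemma ip_Im: "f \<in> H \<Longrightarrow> Im (ip f f) = 0"
  using hil unfolding is_hilbert_space_def by blast
lemma ip_Re: "f \<in> H \<Longrightarrow> Re (ip f f) \<ge> 0"
  using hil unfolding is_hilbert_space_def by blast
lemma ip_def0: "f \<in> H \<Longrightarrow> ip f f = 0 \<Longrightarrow> f = (\<lambda>y. 0)"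
  using hil unfolding is_hilbert_space_def by blast

lemma scale_in: "f \<in> H \<Longrightarrow> (\<lambda>y. c * f y) \<in> H"
  using lin_in[of f "\<lambda>y. 0" c] zero_in by simp
lemma add_in: "f \<in> H \<Longrightarrow> g \<in> H \<Longrightarrow> (\<lambda>y. f y + g y) \<in> H"
  using lin_in[of f g 1] by simp
lemma fdiff_eq: "fdiff f g = (\<lambda>y. (-1) * g y + f y)"
  unfolding fdiff_def by simp
lemma fdiff_in: "f \<in> H \<Longrightarrow> g \<in> H \<Longrightarrow> fdiff f g \<in> H"
  unfolding fdiff_eq by (rule lin_in)
lemma ip_zero: "h \<in> H \<Longrightarrow> ip (\<lambda>y. 0) h = 0"
  using ip_lin[of "\<lambda>y. 0" "\<lambda>y. 0" h 1] zero_in by simp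
lemma ip_scale: "f \<in> H \<Longrightarrow> h \<in> H \<Longrightarrow> ip (\<lambda>y. c * f y) h = c * ip f h"
  using ip_lin[of f "\<lambda>y. 0" h c] zero_in ip_zero by simp
lemma ip_fdiff: "f \<in> H \<Longrightarrow> g \<in> H \<Longrightarrow> h \<in> H \<Longrightarrow> ip (fdiff f g) h = ip f h - ip g h"
  unfolding fdiff_eq using ip_lin[of g f h "-1"] by simp
lemma ip_real: "f \<in> H \<Longrightarrow> ip f f = complex_of_real (Re (ip f f))"
  by (simp add: complex_eq_iff ip_Im)
lemma ip_cnj_self: "f \<in> H \<Longrightarrow> cnj (ip f f) = ip f f"
  using ip_sym[of f f] by simp

lemma expand:
  assumes f: "f \<in> H" and g: "g \<in> H"
  shows "ip (\<lambda>y. c * g y + f y) (\<lambda>y. c * g y + f y)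
     = c * cnj c * ip g g + c * ip g f + cnj c * ip f g + ip f f"
proof -
  define k where "k = (\<lambda>y. c * g y + f y)"
  have k: "k \<in> H" unfolding k_def using g f by (rule lin_in)
  have "ip k k = c * ip g k + ip f k" unfolding k_def[symmetric]
    using ip_lin[OF g f k] k_def by simp
  also have "ip g k = cnj (ip k g)" using ip_sym[OF k g] .
  also have "ip k g = c * ip g g + ip f g" unfolding k_def using ip_lin[OF g f g] .
  also have "ip f k = cnj (ip k f)" using ip_sym[OF k f] .
  also have "ip k f = c * ip g f + ip f f" unfolding k_def using ip_lin[OF g f f] .
  finally have "ip k k = c * cnj (c * ip g g + ip f g) + cnj (c * ip g f + ip f f)" .
  also have "\<dots> = c * cnj c * cnj (ip g g) + c * cnj (ip f g) + cnj c * cnj (ip g f) + cnj (ip f f)"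
    by (simp add: algebra_simps)
  also have "\<dots> = c * cnj c * ip g g + c * ip g f + cnj c * ip f g + ip f f"
    using ip_cnj_self[OF f] ip_cnj_self[OF g] ip_sym[OF f g] ip_sym[OF g f] by simp
  finally show ?thesis unfolding k_def .
qed

lemma hnorm_sq: "f \<in> H \<Longrightarrow> (hnorm ip f)\<^sup>2 = Re (ip f f)"
  unfolding hnorm_def using ip_Re by simp
lemma hnorm_nonneg: "f \<in> H \<Longrightarrow> hnorm ip f \<ge> 0"
  unfolding hnorm_def using ip_Re by simp
lemma hnorm_zero: "hnorm ip (\<lambda>y. 0) = 0"
  unfolding hnorm_def using ip_zero zero_in by simp
lemma hnorm_eq0: "f \<in> H \<Longrightarrow> hnorm ip f = 0 \<Longrightarrow> f = (\<lambda>y. 0)"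
  unfolding hnorm_def using ip_def0 ip_real by (metis of_real_0 real_sqrt_eq_zero_cancel_iff)
lemma hnorm_pos: "f \<in> H \<Longrightarrow> f \<noteq> (\<lambda>y. 0) \<Longrightarrow> hnorm ip f > 0"
  using hnorm_eq0 hnorm_nonneg by force

lemma CS:
  assumes f: "f \<in> H" and g: "g \<in> H"
  shows "cmod (ip f g) \<le> hnorm ip f * hnorm ip g"
proof (cases "ip g g = 0")
  case True
  then have "g = (\<lambda>y. 0)" using ip_def0 g by blast
  then have "ip f g = 0" using ip_sym[OF g f] ip_zero[OF f] by simp
  then show ?thesis using hnorm_nonneg f g by simp
next
  case False
  define B where "B = Re (ip g g)"
  define A where "A = Re (ip f f)"
  define a where "a = ip f g"
  have Bpos: "B > 0" using False ip_Re[OF g] ip_real[OF g] unfolding B_def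
    by (metis less_eq_real_def of_real_0)
  have gg: "ip g g = of_real B" using ip_real[OF g] B_def by simp
  have ff: "ip f f = of_real A" using ip_real[OF f] A_def by simp
  have gf: "ip g f = cnj a" using ip_sym[OF f g] a_def by simp
  define t where "t = - (a / of_real B)"
  have "ip (\<lambda>y. t * g y + f y) (\<lambda>y. t * g y + f y)
     = t * cnj t * of_real B + t * cnj a + cnj t * a + of_real A"
    using expand[OF f g, of t] gg ff gf a_def by simp
  also have "\<dots> = of_real (A - (cmod a)^2 / B)"
  proof -
    have ac: "a * cnj a = of_real ((cmod a)^2)" by (metis complex_norm_square)
    have ac2: "cnj a * a = of_real ((cmod a)^2)" by (metis complex_norm_square mult.commute)
    show ?thesis using Bpos unfolding t_def
      by (simp add: field_simps ac ac2)
  qed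
  finally have "A - (cmod a)^2 / B \<ge> 0"
    using ip_Re[OF lin_in[OF g f, of t]] by simp
  then have "(cmod a)^2 \<le> A * B" using Bpos by (simp add: field_simps)
  also have "A * B = (hnorm ip f * hnorm ip g)^2"
    using hnorm_sq[OF f] hnorm_sq[OF g] A_def B_def by (simp add: power_mult_distrib)
  finally show ?thesis unfolding a_def
    using hnorm_nonneg[OF f] hnorm_nonneg[OF g] power2_le_imp_le by (metis mult_nonneg_nonneg)
qed

lemma hnorm_scale: "f \<in> H \<Longrightarrow> hnorm ip (\<lambda>y. c * f y) = cmod c * hnorm ip f"
proof -
  assume f: "f \<in> H"
  have "ip (\<lambda>y. c * f y) (\<lambda>y. c * f y) = c * cnj c * ip f f"
    using expand[OF zero_in f, of c] ip_zero[OF f] ip_zero[OF zero_in] ip_sym[OF zero_in f] by simp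
  also have "\<dots> = of_real ((cmod c)^2 * Re (ip f f))"
    using ip_real[OF f] by (metis complex_norm_square of_real_mult)
  finally show ?thesis unfolding hnorm_def
    by (simp add: real_sqrt_mult)
qed

lemma triangle:
  assumes f: "f \<in> H" and g: "g \<in> H"
  shows "hnorm ip (\<lambda>y. f y + g y) \<le> hnorm ip f + hnorm ip g"
proof -
  have "ip (\<lambda>y. f y + g y) (\<lambda>y. f y + g y) = ip f f + ip f g + ip g f + ip g g"
    using expand[OF g f, of 1] by (simp add: algebra_simps)
  then have "Re (ip (\<lambda>y. f y + g y) (\<lambda>y. f y + g y)) = Re (ip f f) + 2 * Re (ip f g) + Re (ip g g)"
    using ip_sym[OF f g] by simp
  also have "\<dots> \<le> Re (ip f f) + 2 * (hnorm ip f * hnorm ip g) + Re (ip g g)"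
    using CS[OF f g] complex_Re_le_cmod[of "ip f g"] by linarith
  also have "\<dots> = (hnorm ip f + hnorm ip g)^2"
    using hnorm_sq[OF f] hnorm_sq[OF g] by (simp add: power2_eq_square algebra_simps)
  finally have "hnorm ip (\<lambda>y. f y + g y) \<le> sqrt ((hnorm ip f + hnorm ip g)^2)"
    unfolding hnorm_def[of ip "\<lambda>y. f y + g y"] by (rule real_sqrt_le_mono)
  then show ?thesis using hnorm_nonneg[OF f] hnorm_nonneg[OF g] by simp
qed

lemma hnorm_lin:
  assumes f: "f \<in> H" and g: "g \<in> H"
  shows "hnorm ip (\<lambda>y. c * f y + g y) \<le> cmod c * hnorm ip f + hnorm ip g"
  using triangle[OF scale_in[OF f, of c] g] hnorm_scale[OF f, of c] by simp

lemma hnorm_fdiff_sym: "f \<in> H \<Longrightarrow> g \<in> H \<Longrightarrow> hnorm ip (fdiff f g) = hnorm ip (fdiff g f)"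
proof -
  assume f: "f \<in> H" and g: "g \<in> H"
  have "fdiff f g = (\<lambda>y. (-1) * fdiff g f y)" unfolding fdiff_def by auto
  then show ?thesis using hnorm_scale[OF fdiff_in[OF g f], of "-1"] by simp
qed

lemma hnorm_diff_le: "f \<in> H \<Longrightarrow> g \<in> H \<Longrightarrow> \<bar>hnorm ip f - hnorm ip g\<bar> \<le> hnorm ip (fdiff f g)"
proof -
  assume f: "f \<in> H" and g: "g \<in> H"
  have 1: "f = (\<lambda>y. fdiff f g y + g y)" unfolding fdiff_def by simp
  have 2: "g = (\<lambda>y. fdiff g f y + f y)" unfolding fdiff_def by simp
  have "hnorm ip f \<le> hnorm ip (fdiff f g) + hnorm ip g"
    using triangle[OF fdiff_in[OF f g] g] 1 by simp
  moreover have "hnorm ip g \<le> hnorm ip (fdiff g f) + hnorm ip f"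
    using triangle[OF fdiff_in[OF g f] f] 2 by simp
  ultimately show ?thesis using hnorm_fdiff_sym[OF f g] by linarith
qed

end

locale setting =
  fixes H :: "('x \<Rightarrow> complex) set"
    and ip :: "('x \<Rightarrow> complex) \<Rightarrow> ('x \<Rightarrow> complex) \<Rightarrow> complex"
    and kf :: "'x \<Rightarrow> 'x \<Rightarrow> complex"
    and F :: "'x \<Rightarrow> 'x"
    and xs :: "nat \<Rightarrow> 'x"
    and \<epsilon> :: real
  assumes rkhs: "is_rkhs H ip kf"
    and dense: "densely_defined_in H ip (koop_dom H F)"
    and core: "is_core ip (kadj_dom H ip F) (kadj H ip F) (fspan ((\<lambda>j. kf (xs j)) ` {1..}))"
    and eps: "\<epsilon> > 0"
begin

sublocale hs H ip
  by unfold_locales (use rkhs in \<open>simp add: is_rkhs_def\<close>)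

abbreviation "D \<equiv> kadj_dom H ip F"
abbreviation "T \<equiv> kadj H ip F"
abbreviation "A \<equiv> kadj_shift H ip F"
abbreviation "S0 \<equiv> fspan ((\<lambda>j. kf (xs j)) ` {1..})"

lemma D_sub: "D \<subseteq> H" by (auto simp: kadj_dom_def)

lemma T_in:
  assumes h: "h \<in> D" shows "T h \<in> H"
proof -
  define P where "P = (\<lambda>w. w \<in> H \<and> (\<forall>g\<in>koop_dom H F. ip (g \<circ> F) h = ip g w))"
  obtain w where w: "P w" using h unfolding kadj_dom_def P_def by blast
  have uniq: "w' = w" if w': "P w'" for w'
  proof -
    have wH: "w \<in> H" and w'H: "w' \<in> H" using w w' P_def by auto
    define d where "d = fdiff w' w"
    have dH: "d \<in> H" unfolding d_def using w'H wH by (rule fdiff_in)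
    have orth: "ip g d = 0" if g: "g \<in> koop_dom H F" for g
    proof -
      have gH: "g \<in> H" using g by (simp add: koop_dom_def)
      have "ip g d = cnj (ip d g)" using ip_sym[OF dH gH] .
      also have "ip d g = ip w' g - ip w g" unfolding d_def using ip_fdiff[OF w'H wH gH] .
      also have "cnj (ip w' g - ip w g) = ip g w' - ip g w"
        using ip_sym[OF gH w'H] ip_sym[OF gH wH] by simp
      also have "\<dots> = 0"
      proof -
        have "ip (g \<circ> F) h = ip g w" using g w unfolding P_def by blast
        moreover have "ip (g \<circ> F) h = ip g w'" using g w' unfolding P_def by blast
        ultimately show ?thesis by simp
      qed
      finally show ?thesis .
    qed
    have "hnorm ip d = 0"
    proof (rule ccontr)
      assume ne: "hnorm ip d \<noteq> 0"
      then have pos: "hnorm ip d > 0" using hnorm_nonneg[OF dH] by simp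
      obtain g where g: "g \<in> koop_dom H F" and gl: "hnorm ip (fdiff d g) < hnorm ip d"
        using dense pos dH unfolding densely_defined_in_def by blast
      have gH: "g \<in> H" using g by (simp add: koop_dom_def)
      have "ip d d = ip (fdiff d g) d"
        using ip_fdiff[OF dH gH dH] orth[OF g] by simp
      then have "(hnorm ip d)^2 = Re (ip (fdiff d g) d)"
        using hnorm_sq[OF dH] by simp
      also have "\<dots> \<le> cmod (ip (fdiff d g) d)" by (rule complex_Re_le_cmod)
      also have "\<dots> \<le> hnorm ip (fdiff d g) * hnorm ip d" using CS[OF fdiff_in[OF dH gH] dH] .
      also have "\<dots> < hnorm ip d * hnorm ip d" using gl pos by simp
      finally show False by (simp add: power2_eq_square)
    qed
    then have "d = (\<lambda>y. 0)" using hnorm_eq0[OF dH] by simp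
    then show "w' = w" unfolding d_def fdiff_def by (simp add: fun_eq_iff)
  qed
  have "P (T h)" unfolding kadj_def P_def[symmetric] using w uniq by (rule theI)
  then show ?thesis unfolding P_def by simp
qed


lemma A_in: "h \<in> D \<Longrightarrow> A z h \<in> H"
  unfolding kadj_shift_def using T_in D_sub by (blast intro: fdiff_in scale_in)

lemma S0_sub: "S0 \<subseteq> D" using core by (simp add: is_core_def)

lemma A_shift:
  assumes h: "h \<in> D"
  shows "hnorm ip (A w h) \<le> hnorm ip (A z h) + cmod (w - z) * hnorm ip h"
proof -
  have hH: "h \<in> H" using h D_sub by blast
  have "A w h = (\<lambda>y. (z - w) * h y + A z h y)"
    unfolding kadj_shift_def fdiff_def by (simp add: algebra_simps)
  then have "hnorm ip (A w h) \<le> cmod (z - w) * hnorm ip h + hnorm ip (A z h)"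
    using hnorm_lin[OF hH A_in[OF h], of "z - w"] by simp
  then show ?thesis by (simp add: norm_minus_commute)
qed

lemma A_cont:
  assumes g: "g \<in> D" and s: "s \<in> D"
  shows "\<bar>hnorm ip (A z s) - hnorm ip (A z g)\<bar>
     \<le> hnorm ip (fdiff (T s) (T g)) + cmod z * hnorm ip (fdiff s g)"
proof -
  have gH: "g \<in> H" and sH: "s \<in> H" using g s D_sub by auto
  have "fdiff (A z s) (A z g) = (\<lambda>y. (-z) * fdiff s g y + fdiff (T s) (T g) y)"
    unfolding kadj_shift_def fdiff_def by (simp add: algebra_simps)
  then have "hnorm ip (fdiff (A z s) (A z g)) \<le> cmod z * hnorm ip (fdiff s g) + hnorm ip (fdiff (T s) (T g))"
    using hnorm_lin[OF fdiff_in[OF sH gH] fdiff_in[OF T_in[OF s] T_in[OF g]], of "-z"] by simp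
  then show ?thesis using hnorm_diff_le[OF A_in[OF s, of z] A_in[OF g, of z]] norm_minus_cancel[of z] by linarith
qed

end


context setting begin

lemma V_sub: "V_N kf xs N \<subseteq> S0"
proof
  fix g assume "g \<in> V_N kf xs N"
  then obtain I c where I: "finite I" "I \<subseteq> (\<lambda>j. kf (xs j)) ` {1..N}" "g = (\<lambda>y. \<Sum>f\<in>I. c f * f y)"
    unfolding V_N_def fspan_def by blast
  have "I \<subseteq> (\<lambda>j. kf (xs j)) ` {1..}" using I(2) by auto
  then show "g \<in> S0" unfolding fspan_def using I by blast
qed

lemma approx:
  assumes sz: "sigma_inf ip D (A z) < ereal \<epsilon>"
  shows "\<exists>\<eta>>0. \<exists>M. \<forall>N\<ge>M. \<forall>w. cmod (w - z) < \<eta> \<longrightarrow> sigma_inf ip (V_N kf xs N) (A w) < ereal \<epsilon>"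
proof -
  obtain g where gD: "g \<in> D" and g0: "g \<noteq> (\<lambda>y. 0)"
    and gr: "ereal (hnorm ip (A z g) / hnorm ip g) < ereal \<epsilon>"
    using sz unfolding sigma_inf_def Inf_less_iff by blast
  define r where "r = hnorm ip (A z g) / hnorm ip g"
  have r: "r < \<epsilon>" using gr r_def by simp
  have gH: "g \<in> H" using gD D_sub by blast
  have gpos: "hnorm ip g > 0" using hnorm_pos[OF gH g0] .
  obtain s where sS: "\<And>n. s n \<in> S0" and s1: "(\<lambda>n. hnorm ip (fdiff (s n) g)) \<longlonglongrightarrow> 0"
    and s2: "(\<lambda>n. hnorm ip (fdiff (T (s n)) (T g))) \<longlonglongrightarrow> 0"
    using core gD unfolding is_core_def by blast
  have sD: "s n \<in> D" for n using sS S0_sub by blast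
  have sH: "s n \<in> H" for n using sD D_sub by blast
  have lim1: "(\<lambda>n. hnorm ip (A z (s n))) \<longlonglongrightarrow> hnorm ip (A z g)"
  proof -
    have "(\<lambda>n. hnorm ip (A z (s n)) - hnorm ip (A z g)) \<longlonglongrightarrow> 0"
    proof (rule Lim_null_comparison)
      show "\<forall>\<^sub>F n in sequentially. norm (hnorm ip (A z (s n)) - hnorm ip (A z g))
          \<le> hnorm ip (fdiff (T (s n)) (T g)) + cmod z * hnorm ip (fdiff (s n) g)"
        using A_cont[OF gD sD] by simp
      show "(\<lambda>n. hnorm ip (fdiff (T (s n)) (T g)) + cmod z * hnorm ip (fdiff (s n) g)) \<longlonglongrightarrow> 0"
        using tendsto_add_zero[OF s2 tendsto_mult_right_zero[OF s1]] by simp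
    qed
    then show ?thesis by (simp add: LIM_zero_iff)
  qed
  have lim2: "(\<lambda>n. hnorm ip (s n)) \<longlonglongrightarrow> hnorm ip g"
  proof -
    have "(\<lambda>n. hnorm ip (s n) - hnorm ip g) \<longlonglongrightarrow> 0"
    proof (rule Lim_null_comparison)
      show "\<forall>\<^sub>F n in sequentially. norm (hnorm ip (s n) - hnorm ip g) \<le> hnorm ip (fdiff (s n) g)"
        using hnorm_diff_le[OF sH gH] by simp
      show "(\<lambda>n. hnorm ip (fdiff (s n) g)) \<longlonglongrightarrow> 0" by (rule s1)
    qed
    then show ?thesis by (simp add: LIM_zero_iff)
  qed
  have lim3: "(\<lambda>n. hnorm ip (A z (s n)) / hnorm ip (s n)) \<longlonglongrightarrow> r"
    unfolding r_def using tendsto_divide[OF lim1 lim2] gpos by simp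
  define e' where "e' = (r + \<epsilon>) / 2"
  have "r < e'" "e' < \<epsilon>" using r unfolding e'_def by auto
  have ev1: "\<forall>\<^sub>F n in sequentially. hnorm ip (A z (s n)) / hnorm ip (s n) < e'"
    using order_tendstoD(2)[OF lim3 \<open>r < e'\<close>] .
  have ev2: "\<forall>\<^sub>F n in sequentially. hnorm ip (s n) > 0"
    using order_tendstoD(1)[OF lim2 gpos] .
  obtain n where n1: "hnorm ip (A z (s n)) / hnorm ip (s n) < e'" and n2: "hnorm ip (s n) > 0"
    using eventually_happens'[OF _ eventually_conj[OF ev1 ev2]] by auto
  define s' where "s' = s n"
  have s'D: "s' \<in> D" and s'H: "s' \<in> H" using sD sH s'_def by auto
  have s'0: "s' \<noteq> (\<lambda>y. 0)" using n2 hnorm_zero s'_def by auto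
  obtain I c where I: "finite I" "I \<subseteq> (\<lambda>j. kf (xs j)) ` {1..}"
    and s'eq: "s' = (\<lambda>y. \<Sum>f\<in>I. c f * f y)"
    using sS[of n] unfolding s'_def fspan_def by blast
  obtain J where J: "J \<subseteq> {1..}" "finite J" "I = (\<lambda>j. kf (xs j)) ` J"
    using finite_subset_image[OF I] by blast
  define M where "M = Max (insert 0 J)"
  have inV: "s' \<in> V_N kf xs N" if "N \<ge> M" for N
  proof -
    have "J \<subseteq> {1..N}" using J that unfolding M_def
      by (auto simp: subset_iff)
    then have "I \<subseteq> (\<lambda>j. kf (xs j)) ` {1..N}" using J by auto
    then show ?thesis unfolding V_N_def fspan_def using I s'eq by blast
  qed
  show ?thesis
  proof (intro exI[of _ "\<epsilon> - e'"] conjI exI[of _ M] allI impI)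
    show "\<epsilon> - e' > 0" using \<open>e' < \<epsilon>\<close> by simp
    fix N w assume N: "M \<le> N" and w: "cmod (w - z) < \<epsilon> - e'"
    have "sigma_inf ip (V_N kf xs N) (A w) \<le> ereal (hnorm ip (A w s') / hnorm ip s')"
      unfolding sigma_inf_def using inV[OF N] s'0 by (auto intro!: Inf_lower)
    also have "hnorm ip (A w s') / hnorm ip s' \<le> (hnorm ip (A z s') + cmod (w - z) * hnorm ip s') / hnorm ip s'"
      using A_shift[OF s'D, of w z] n2 s'_def by (simp add: divide_right_mono)
    also have "\<dots> = hnorm ip (A z s') / hnorm ip s' + cmod (w - z)"
      using n2 s'_def by (simp add: field_simps)
    also have "\<dots> < \<epsilon>" using n1 w s'_def by simp
    finally show "sigma_inf ip (V_N kf xs N) (A w) < ereal \<epsilon>" by simp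
  qed
qed

lemma grid_near:
  assumes N: "N \<ge> 1" and z: "cmod z + 1 \<le> real N"
  shows "\<exists>w\<in>Grid N. cmod (w - z) \<le> 1 / real N"
proof -
  define a where "a = round (real N * Re z)"
  define b where "b = round (real N * Im z)"
  define w where "w = Complex (of_int a / real N) (of_int b / real N)"
  have Np: "real N > 0" using N by simp
  have ha: "\<bar>of_int a - real N * Re z\<bar> \<le> 1/2" unfolding a_def by (rule of_int_round_abs_le)
  have hb: "\<bar>of_int b - real N * Im z\<bar> \<le> 1/2" unfolding b_def by (rule of_int_round_abs_le)
  have "Re (w - z) = (of_int a - real N * Re z) / real N"
    unfolding w_def using Np by (simp add: field_simps)
  then have "\<bar>Re (w - z)\<bar> = \<bar>of_int a - real N * Re z\<bar> / real N"
    using Np by (simp add: abs_divide)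
  also have "\<dots> \<le> (1/2) / real N" by (rule divide_right_mono[OF ha]) (use Np in simp)
  finally have re: "\<bar>Re (w - z)\<bar> \<le> (1/2) / real N" .
  have "Im (w - z) = (of_int b - real N * Im z) / real N"
    unfolding w_def using Np by (simp add: field_simps)
  then have "\<bar>Im (w - z)\<bar> = \<bar>of_int b - real N * Im z\<bar> / real N"
    using Np by (simp add: abs_divide)
  also have "\<dots> \<le> (1/2) / real N" by (rule divide_right_mono[OF hb]) (use Np in simp)
  finally have im: "\<bar>Im (w - z)\<bar> \<le> (1/2) / real N" .
  have d: "cmod (w - z) \<le> 1 / real N" using cmod_le[of "w - z"] re im by simp
  have "1 / real N \<le> 1" using N by simp
  then have cw: "cmod w \<le> real N" using d z norm_triangle_ineq2[of w z] by linarith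
  have "\<exists>a' b' :: int. w = Complex (of_int a' / real N) (of_int b' / real N) \<and> cmod w \<le> real N"
    by (rule exI[of _ a], rule exI[of _ b]) (use cw w_def in simp)
  then have "w \<in> Grid N" unfolding Grid_def by blast
  then show ?thesis using d by blast
qed

lemma near_Gamma:
  assumes sz: "sigma_inf ip D (A z) < ereal \<epsilon>" and d: "\<delta> > 0"
  shows "\<forall>\<^sub>F N in sequentially. \<exists>w\<in>Gamma_N H ip kf F xs \<epsilon> N. cmod (w - z) < \<delta>"
proof -
  obtain \<eta> M where \<eta>: "\<eta> > 0" and M: "\<And>N w. N \<ge> M \<Longrightarrow> cmod (w - z) < \<eta> \<Longrightarrow> sigma_inf ip (V_N kf xs N) (A w) < ereal \<epsilon>"
    using approx[OF sz] by blast
  obtain N1 :: nat where N1: "N1 > 0" "inverse (real N1) < min \<eta> \<delta>"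
    using ex_inverse_of_nat_less[of "min \<eta> \<delta>"] \<eta> d by auto
  obtain N2 :: nat where N2: "cmod z + 1 \<le> real N2" using real_arch_simple by blast
  show ?thesis unfolding eventually_sequentially
  proof (intro exI[of _ "max (max M N1) N2"] allI impI)
    fix N assume N: "max (max M N1) N2 \<le> N"
    have N1': "N \<ge> 1" using N N1 by simp
    have "cmod z + 1 \<le> real N" using N N2 by simp
    then obtain w where w: "w \<in> Grid N" "cmod (w - z) \<le> 1 / real N"
      using grid_near[OF N1'] by blast
    have "1 / real N \<le> inverse (real N1)" using N N1 by (simp add: divide_simps)
    then have wd: "cmod (w - z) < min \<eta> \<delta>" using w(2) N1(2) by linarith
    have "sigma_inf ip (V_N kf xs N) (A w) < ereal \<epsilon>" using M[of N w] N wd by simp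
    then have "w \<in> Gamma_N H ip kf F xs \<epsilon> N" unfolding Gamma_N_def using w by simp
    then show "\<exists>w\<in>Gamma_N H ip kf F xs \<epsilon> N. cmod (w - z) < \<delta>" using wd by auto
  qed
qed

end


context setting begin

abbreviation "Sp \<equiv> sp_ap_eps H ip F \<epsilon>"
abbreviation "Gam \<equiv> Gamma_N H ip kf F xs \<epsilon>"

lemma Sp_eq: "Sp = closure {z. sigma_inf ip D (A z) < ereal \<epsilon>}"
  unfolding sp_ap_eps_def by simp

lemma Gamma_sub: "Gam N \<subseteq> Sp"
proof
  fix z assume z: "z \<in> Gam N"
  have lt: "sigma_inf ip (V_N kf xs N) (A z) < ereal \<epsilon>" using z unfolding Gamma_N_def by blast
  have sub: "V_N kf xs N \<subseteq> D" using V_sub S0_sub by blast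
  have "{ereal (hnorm ip (A z g) / hnorm ip g) | g. g \<in> V_N kf xs N \<and> g \<noteq> (\<lambda>y. 0)}
     \<subseteq> {ereal (hnorm ip (A z g) / hnorm ip g) | g. g \<in> D \<and> g \<noteq> (\<lambda>y. 0)}"
    using sub by blast
  then have le: "sigma_inf ip D (A z) \<le> sigma_inf ip (V_N kf xs N) (A z)"
    unfolding sigma_inf_def by (rule Inf_superset_mono)
  have "sigma_inf ip D (A z) < ereal \<epsilon>" using le lt by (rule le_less_trans)
  then have "z \<in> {z. sigma_inf ip D (A z) < ereal \<epsilon>}" by simp
  then show "z \<in> Sp" unfolding Sp_eq by (rule subsetD[OF closure_subset])
qed

lemma uniform:
  assumes d: "\<delta> > 0"
  shows "\<forall>\<^sub>F N in sequentially. \<forall>y\<in>Sp \<inter> cball 0 R. \<exists>w\<in>Gam N. dist y w < \<delta>"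
proof -
  define K where "K = Sp \<inter> cball 0 R"
  have cK: "compact K" unfolding K_def Sp_eq
    by (intro closed_Int_compact) auto
  have "\<forall>y\<in>K. \<exists>z. sigma_inf ip D (A z) < ereal \<epsilon> \<and> dist z y < \<delta>/3"
  proof
    fix y assume "y \<in> K"
    then have "y \<in> closure {z. sigma_inf ip D (A z) < ereal \<epsilon>}" unfolding K_def Sp_eq by blast
    moreover have "\<delta>/3 > 0" using d by simp
    ultimately obtain z where "z \<in> {z. sigma_inf ip D (A z) < ereal \<epsilon>}" "dist z y < \<delta>/3"
      unfolding closure_approachable by blast
    then show "\<exists>z. sigma_inf ip D (A z) < ereal \<epsilon> \<and> dist z y < \<delta>/3" by blast
  qed
  from bchoice[OF this] obtain zf where zf0: "\<forall>y\<in>K. sigma_inf ip D (A (zf y)) < ereal \<epsilon> \<and> dist (zf y) y < \<delta>/3"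
    by blast
  then have zf: "\<And>y. y \<in> K \<Longrightarrow> sigma_inf ip D (A (zf y)) < ereal \<epsilon> \<and> dist (zf y) y < \<delta>/3"
    by blast
  have cov: "K \<subseteq> (\<Union>y\<in>K. ball y (\<delta>/3))" using d by auto
  obtain C where C: "C \<subseteq> K" "finite C" "K \<subseteq> (\<Union>y\<in>C. ball y (\<delta>/3))"
    using compactE_image[OF cK _ cov] by (metis open_ball)
  have "\<forall>y\<in>C. \<forall>\<^sub>F N in sequentially. \<exists>w\<in>Gam N. cmod (w - zf y) < \<delta>/3"
  proof
    fix y assume "y \<in> C"
    then have "y \<in> K" using C(1) by blast
    moreover have "\<delta>/3 > 0" using d by simp
    ultimately show "\<forall>\<^sub>F N in sequentially. \<exists>w\<in>Gam N. cmod (w - zf y) < \<delta>/3"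
      using near_Gamma[of "zf y" "\<delta>/3"] zf by blast
  qed
  then have ev: "\<forall>\<^sub>F N in sequentially. \<forall>y\<in>C. \<exists>w\<in>Gam N. cmod (w - zf y) < \<delta>/3"
    by (rule eventually_ball_finite[OF C(2)])
  show ?thesis
  proof (rule eventually_mono[OF ev])
    fix N assume H1: "\<forall>y\<in>C. \<exists>w\<in>Gam N. cmod (w - zf y) < \<delta>/3"
    show "\<forall>y\<in>Sp \<inter> cball 0 R. \<exists>w\<in>Gam N. dist y w < \<delta>"
    proof
      fix y' assume "y' \<in> Sp \<inter> cball 0 R"
      then have "y' \<in> K" unfolding K_def .
      then obtain y where y: "y \<in> C" "dist y y' < \<delta>/3" using C(3) by auto
      obtain w where w: "w \<in> Gam N" "cmod (w - zf y) < \<delta>/3" using H1 y(1) by blast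
      have zy: "dist (zf y) y < \<delta>/3" using zf C(1) y(1) by blast
      have t1: "dist y' w \<le> dist y' y + dist y w" by (rule dist_triangle)
      have t2: "dist y w \<le> dist y (zf y) + dist (zf y) w" by (rule dist_triangle)
      have "dist y' w \<le> dist y' y + dist y (zf y) + dist (zf y) w" using t1 t2 by linarith
      also have "\<dots> < \<delta>" using y(2) zy w(2)
        by (simp add: dist_commute dist_norm norm_minus_commute)
      finally show "\<exists>w\<in>Gam N. dist y' w < \<delta>" using w(1) by blast
    qed
  qed
qed

end


lemma series_small:
  fixes t :: "nat \<Rightarrow> real" and e :: real and K :: nat
  assumes t0: "\<And>m. 0 \<le> t m" and t1: "\<And>m. t m \<le> (1/2)^Suc m"
    and head: "\<And>m. m < K \<Longrightarrow> t m \<le> (1/2)^Suc m * (e/2)"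
    and Ke: "(1/2::real)^K < e/2"
  shows "\<bar>suminf t\<bar> < e"
proof -
  have hs: "(\<lambda>n. (1/2::real)^Suc n) sums 1" by (rule power_half_series)
  have sg: "summable (\<lambda>n. (1/2::real)^Suc n)" using hs by (rule sums_summable)
  have st: "summable t"
    by (rule summable_comparison_test[OF _ sg]) (use t0 t1 in auto)
  have split: "suminf t = (\<Sum>n. t (n + K)) + (\<Sum>i<K. t i)"
    by (rule suminf_split_initial_segment[OF st])
  have tailsums: "(\<lambda>n. (1/2::real)^Suc (n + K)) sums ((1/2)^K * 1)"
  proof -
    have "(\<lambda>n. (1/2::real)^K * (1/2)^Suc n) sums ((1/2)^K * 1)"
      by (rule sums_mult[OF hs])
    moreover have "(\<lambda>n. (1/2::real)^K * (1/2)^Suc n) = (\<lambda>n. (1/2)^Suc (n + K))"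
      by (rule ext) (simp add: power_add mult_ac)
    ultimately show ?thesis by simp
  qed
  have stK: "summable (\<lambda>n. t (n + K))" using st by (simp add: summable_iff_shift)
  have tail: "(\<Sum>n. t (n + K)) \<le> (1/2)^K"
  proof -
    have "(\<Sum>n. t (n + K)) \<le> (\<Sum>n. (1/2::real)^Suc (n + K))"
      by (rule suminf_le) (use t1 stK sums_summable[OF tailsums] in auto)
    also have "\<dots> = (1/2)^K" using sums_unique[OF tailsums] by simp
    finally show ?thesis .
  qed
  have hd: "(\<Sum>i<K. t i) \<le> e/2"
  proof -
    have "(\<Sum>i<K. t i) \<le> (\<Sum>i<K. (1/2::real)^Suc i * (e/2))"
      by (rule sum_mono) (use head in auto)
    also have "\<dots> = (\<Sum>i<K. (1/2::real)^Suc i) * (e/2)" by (rule sum_distrib_right[symmetric])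
    also have "(\<Sum>i<K. (1/2::real)^Suc i) \<le> 1"
      using sum_le_suminf[OF sg, of "{..<K}"] sums_unique[OF hs] by simp
    then have "(\<Sum>i<K. (1/2::real)^Suc i) * (e/2) \<le> 1 * (e/2)"
    proof (rule mult_right_mono)
      have "0 < (1/2::real)^K" by simp
      then show "0 \<le> e/2" using Ke by linarith
    qed
    finally show ?thesis by simp
  qed
  have nn: "suminf t \<ge> 0" using st t0 by (simp add: suminf_nonneg)
  show ?thesis using split tail hd nn Ke by linarith
qed

context setting begin

lemma infdist_bound:
  "\<bar>infdist x X - infdist x Y\<bar> \<le> \<bar>infdist 0 X - infdist 0 Y\<bar> + 2 * norm x"
proof -
  have "\<bar>infdist x X - infdist 0 X\<bar> \<le> dist x 0" by (rule infdist_triangle_abs)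
  moreover have "\<bar>infdist x Y - infdist 0 Y\<bar> \<le> dist x 0" by (rule infdist_triangle_abs)
  ultimately show ?thesis by simp
qed

lemma bdd: "bdd_above ((\<lambda>x. \<bar>infdist x X - infdist x Y\<bar>) ` cball (0::complex) r)"
proof (rule bdd_aboveI2)
  fix x :: complex assume "x \<in> cball 0 r"
  then have "norm x \<le> r" by simp
  then show "\<bar>infdist x X - infdist x Y\<bar> \<le> \<bar>infdist 0 X - infdist 0 Y\<bar> + 2 * r"
    using infdist_bound[of x X Y] by linarith
qed

lemma main:
  "(\<forall>N\<ge>1. Gam N \<subseteq> Sp) \<and> AW_converges Gam Sp"
proof
  show "\<forall>N\<ge>1. Gam N \<subseteq> Sp" using Gamma_sub by simp
  show "AW_converges Gam Sp"
  proof (cases "Sp = {}")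
    case True
    then have "Gam n = {}" for n using Gamma_sub[of n] by simp
    then show ?thesis unfolding AW_converges_def using True by simp
  next
    case False
    then obtain p0 where p0: "p0 \<in> Sp" by (meson ex_in_conv)
    have "{z. sigma_inf ip D (A z) < ereal \<epsilon>} \<noteq> {}"
    proof
      assume "{z. sigma_inf ip D (A z) < ereal \<epsilon>} = {}"
      then have "Sp = {}" unfolding Sp_eq by simp
      then show False using False by simp
    qed
    then have "\<exists>z. sigma_inf ip D (A z) < ereal \<epsilon>" by simp
    then obtain z0 where z0: "sigma_inf ip D (A z0) < ereal \<epsilon>" by (rule exE)
    have ne: "\<forall>\<^sub>F n in sequentially. Gam n \<noteq> {}"
      by (rule eventually_mono[OF near_Gamma[OF z0 zero_less_one]]) (erule bexE, metis empty_iff)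
    have clSp: "closed Sp" unfolding Sp_eq by simp
    define b where "b N m = (SUP x\<in>cball 0 (real (Suc m)). \<bar>infdist x (Gam N) - infdist x Sp\<bar>)" for N m
    have b0: "0 \<le> b N m" for N m
      unfolding b_def by (rule cSUP_upper2[OF bdd, of 0]) auto
    have bsmall: "\<forall>\<^sub>F N in sequentially. b N m \<le> \<delta>" if d: "\<delta> > 0" for m \<delta>
    proof -
      define R where "R = 2 * real (Suc m) + norm p0"
      show ?thesis
      proof (rule eventually_mono[OF uniform[OF d, of R]])
        fix N assume U: "\<forall>y\<in>Sp \<inter> cball 0 R. \<exists>w\<in>Gam N. dist y w < \<delta>"
        show "b N m \<le> \<delta>" unfolding b_def
        proof (rule cSUP_least)
          show "cball 0 (real (Suc m)) \<noteq> {}" by simp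
          fix x :: complex assume x: "x \<in> cball 0 (real (Suc m))"
          obtain y where y: "y \<in> Sp" "infdist x Sp = dist x y"
            by (rule infdist_attains_inf[OF clSp False])
          have "dist x y \<le> dist x p0" using infdist_le[OF p0, of x] y(2) by simp
          also have "\<dots> \<le> norm x + norm p0" by (simp add: dist_norm norm_triangle_ineq4)
          finally have "norm y \<le> R" unfolding R_def using x norm_triangle_ineq2[of y x]
            by (simp add: dist_norm norm_minus_commute)
          then have yin: "y \<in> Sp \<inter> cball 0 R" using y(1) by simp
          have "\<exists>w\<in>Gam N. dist y w < \<delta>" by (rule bspec[OF U yin])
          then obtain w where w: "w \<in> Gam N" "dist y w < \<delta>" by (rule bexE)
          have GS: "Gam N \<subseteq> Sp" by (rule Gamma_sub)
          have GN: "Gam N \<noteq> {}" using w(1) by (metis empty_iff)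
          have "infdist x (Gam N) \<le> dist x w" by (rule infdist_le[OF w(1)])
          also have "\<dots> \<le> dist x y + dist y w" by (rule dist_triangle)
          finally have up: "infdist x (Gam N) \<le> infdist x Sp + \<delta>" using y(2) w(2) by linarith
          have lo: "infdist x Sp \<le> infdist x (Gam N)" by (rule infdist_mono[OF GS GN])
          show "\<bar>infdist x (Gam N) - infdist x Sp\<bar> \<le> \<delta>" using up lo by linarith
        qed
      qed
    qed
    have dAW: "d_AW (Gam N) Sp = (\<Sum>m. (1/2) ^ (Suc m) * min 1 (b N m))" for N
      unfolding d_AW_def b_def by simp
    have "(\<lambda>N. d_AW (Gam N) Sp) \<longlonglongrightarrow> 0"
    proof (rule tendstoI)
      fix e :: real assume e: "e > 0"
      obtain K where K: "(1/2::real)^K < e/2" using real_arch_pow_inv[of "e/2" "1/2"] e by auto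
      have "\<forall>m\<in>{..<K}. \<forall>\<^sub>F N in sequentially. b N m \<le> e/2"
      proof
        fix m show "\<forall>\<^sub>F N in sequentially. b N m \<le> e/2" using e by (intro bsmall) simp
      qed
      then have ev: "\<forall>\<^sub>F N in sequentially. \<forall>m\<in>{..<K}. b N m \<le> e/2"
        by (rule eventually_ball_finite[OF finite_lessThan])
      show "\<forall>\<^sub>F N in sequentially. dist (d_AW (Gam N) Sp) 0 < e"
      proof (rule eventually_mono[OF ev])
        fix N assume hN: "\<forall>m\<in>{..<K}. b N m \<le> e/2"
        have "\<bar>\<Sum>m. (1/2::real) ^ (Suc m) * min 1 (b N m)\<bar> < e"
        proof (rule series_small[OF _ _ _ K])
          fix m
          show "0 \<le> (1/2::real) ^ (Suc m) * min 1 (b N m)" using b0[of N m] by simp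
          show "(1/2::real) ^ (Suc m) * min 1 (b N m) \<le> (1/2)^Suc m" by (simp add: mult_left_le)
          assume "m < K"
          then have "b N m \<le> e/2" using hN by simp
          then have "min 1 (b N m) \<le> e/2" by linarith
          then show "(1/2::real) ^ (Suc m) * min 1 (b N m) \<le> (1/2)^Suc m * (e/2)"
            by (simp add: mult_left_mono)
        qed
        then show "dist (d_AW (Gam N) Sp) 0 < e" by (simp add: dAW)
      qed
    qed
    then show ?thesis unfolding AW_converges_def using False ne by simp
  qed
qed

end

theorem mainTheorem3:
  fixes H :: "('x \<Rightarrow> complex) set"
    and ip :: "('x \<Rightarrow> complex) \<Rightarrow> ('x \<Rightarrow> complex) \<Rightarrow> complex"
    and kf :: "'x \<Rightarrow> 'x \<Rightarrow> complex"
    and F :: "'x \<Rightarrow> 'x"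
    and xs :: "nat \<Rightarrow> 'x"
    and \<epsilon> :: real
  assumes rkhs: "is_rkhs H ip kf"
    and dense: "densely_defined_in H ip (koop_dom H F)"
    and core: "is_core ip (kadj_dom H ip F) (kadj H ip F) (fspan ((\<lambda>j. kf (xs j)) ` {1..}))"
    and eps: "\<epsilon> > 0"
  shows "(\<forall>N\<ge>1. Gamma_N H ip kf F xs \<epsilon> N \<subseteq> sp_ap_eps H ip F \<epsilon>)
       \<and> AW_converges (Gamma_N H ip kf F xs \<epsilon>) (sp_ap_eps H ip F \<epsilon>)"
proof -
  interpret setting H ip kf F xs \<epsilon> using assms by unfold_locales
  show ?thesis by (rule main)
qed


end
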